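(* Let $G=(V,E)$ be a finite undirected graph with $|E|>0$, and let $\mathcal{A}_G$ be the DPA defined below. Then $\mathcal{A}_G$ has informative right-congruence.
   Context: $\Sigma:=V\cup\{x_v\mid v\in V\}$ (with fresh letters $x_v$). $\mathcal{A}_G=(\Sigma,V\cup\{q_G\},\delta_G,q_G,c_G)$ has state set $V\cup\{q_G\}$, initial state $q_G$, and for all $u,v\in V$ with $u\neq v$: $\delta_G(q_G,u)=u$, $\delta_G(q_G,x_u)=q_G$, $\delta_G(u,u)=u$, $\delta_G(u,x_u)=u$, $\delta_G(u,v)=q_G$, $\delta_G(u,x_v)=q_G$; priorities $c_G(q_G)=1$ and $c_G(u)=0$ for $u\in V$. A DPA accepts $\alpha\in\Sigma^\omega$ iff the maximal priority among states visited infinitely often in its run is even. For $L\subseteq\Sigma^\omega$, $u\sim_L v$ iff for all $\alpha\in\Sigma^\omega$: $u\alpha\in L\iff v\alpha\in L$. An automaton accepting $L$ has informative right-congruence if its transition system is isomorphic to the transition system induced by $\sim_L$ (states the classes $[u]$, initial $[\epsilon]$, transitions $[u]\xrightarrow{\sigma}[u\sigma]$). *)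

theory Defs
  imports Main "HOL-Library.Omega_Words_Fun"
begin

fun dpa_run :: "('q \<Rightarrow> 'a \<Rightarrow> 'q) \<Rightarrow> 'q \<Rightarrow> 'a word \<Rightarrow> nat \<Rightarrow> 'q" where
  "dpa_run \<delta> q0 w 0 = q0"
| "dpa_run \<delta> q0 w (Suc n) = \<delta> (dpa_run \<delta> q0 w n) (w n)"

definition dpa_accepts :: "('q \<Rightarrow> 'a \<Rightarrow> 'q) \<Rightarrow> 'q \<Rightarrow> ('q \<Rightarrow> nat) \<Rightarrow> 'a word \<Rightarrow> bool" where
  "dpa_accepts \<delta> q0 c w \<longleftrightarrow> even (Max (c ` limit (dpa_run \<delta> q0 w)))"

definition dpa_lang :: "'a set \<Rightarrow> ('q \<Rightarrow> 'a \<Rightarrow> 'q) \<Rightarrow> 'q \<Rightarrow> ('q \<Rightarrow> nat) \<Rightarrow> 'a word set" where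
  "dpa_lang \<Sigma> \<delta> q0 c = {w. (\<forall>n. w n \<in> \<Sigma>) \<and> dpa_accepts \<delta> q0 c w}"

definition right_cong :: "'a set \<Rightarrow> 'a word set \<Rightarrow> ('a list \<times> 'a list) set" where
  "right_cong \<Sigma> L = {(u, v). u \<in> lists \<Sigma> \<and> v \<in> lists \<Sigma> \<and>
      (\<forall>\<alpha>. (\<forall>n. \<alpha> n \<in> \<Sigma>) \<longrightarrow> (u \<frown> \<alpha> \<in> L \<longleftrightarrow> v \<frown> \<alpha> \<in> L))}"

text \<open>Informative right-congruence: the transition system (Q, delta, q0) is isomorphic
  to the transition system induced by the right congruence of the accepted language,
  whose states are the classes [u], initial state [epsilon], transitions [u] -sigma-> [u sigma].\<close>
definition informative_rc :: "'a set \<Rightarrow> 'q set \<Rightarrow> ('q \<Rightarrow> 'a \<Rightarrow> 'q) \<Rightarrow> 'q \<Rightarrow> ('q \<Rightarrow> nat) \<Rightarrow> bool" where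
  "informative_rc \<Sigma> Q \<delta> q0 c \<longleftrightarrow>
     (let R = right_cong \<Sigma> (dpa_lang \<Sigma> \<delta> q0 c) in
      \<exists>f. bij_betw f Q (lists \<Sigma> // R) \<and>
          f q0 = R `` {[]} \<and>
          (\<forall>q\<in>Q. \<forall>\<sigma>\<in>\<Sigma>. \<forall>u\<in>f q. f (\<delta> q \<sigma>) = R `` {u @ [\<sigma>]}))"

datatype 'v letter = Vtx 'v | Xl 'v
datatype 'v state = QG | St 'v

definition sigmaG :: "'v set \<Rightarrow> 'v letter set" where
  "sigmaG V = Vtx ` V \<union> Xl ` V"

definition statesG :: "'v set \<Rightarrow> 'v state set" where
  "statesG V = St ` V \<union> {QG}"

fun deltaG :: "'v state \<Rightarrow> 'v letter \<Rightarrow> 'v state" where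
  "deltaG QG (Vtx u) = St u"
| "deltaG QG (Xl u) = QG"
| "deltaG (St u) (Vtx v) = (if u = v then St u else QG)"
| "deltaG (St u) (Xl v) = (if u = v then St u else QG)"

fun cG :: "'v state \<Rightarrow> nat" where
  "cG QG = 1"
| "cG (St u) = 0"

definition undirected_graph :: "'v set \<Rightarrow> 'v set set \<Rightarrow> bool" where
  "undirected_graph V E \<longleftrightarrow> finite V \<and>
     (\<forall>e\<in>E. \<exists>u v. u \<in> V \<and> v \<in> V \<and> u \<noteq> v \<and> e = {u, v})"

end

theory Submission
  imports Defs
begin

lemma run_prefix: "dpa_run d q w n = foldl d q (prefix n w)"
  by (induction n) auto

lemma run_shift:
  "suffix (length u) (dpa_run d q (u \<frown> a)) = dpa_run d (foldl d q u) a"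
proof
  fix n
  show "suffix (length u) (dpa_run d q (u \<frown> a)) n = dpa_run d (foldl d q u) a n"
    by (simp add: run_prefix)
qed

lemma limit_run_conc:
  "limit (dpa_run d q (u \<frown> a)) = limit (dpa_run d (foldl d q u) a)"
  by (metis run_shift limit_suffix)

lemma limit_ev_const:
  assumes "\<forall>n\<ge>k. x n = c"
  shows "limit x = {c}"
proof
  have "suffix k x = (\<lambda>_. c)" using assms by auto
  then show "limit x \<subseteq> {c}" using limit_in_range_suffix[of x k] by auto
  have "range x \<subseteq> x ` {..<k} \<union> {c}" using assms by (auto simp: not_less) (metis lessThan_iff not_le rev_image_eqI)
  then have "finite (range x)" by (meson finite_Un finite_imageI finite_lessThan finite_subset finite.emptyI finite_insert)
  then obtain a where "a \<in> limit x" using limit_nonempty by blast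
  with \<open>limit x \<subseteq> {c}\<close> show "{c} \<subseteq> limit x" by auto
qed

lemma run_St_same: "dpa_run deltaG (St w) (\<lambda>_. Xl w) n = St w"
  by (induction n) auto

lemma run_QG_X: "dpa_run deltaG QG (\<lambda>_. Xl w) n = QG"
  by (induction n) auto

lemma run_St_other: "v \<noteq> w \<Longrightarrow> n \<ge> 1 \<Longrightarrow> dpa_run deltaG (St v) (\<lambda>_. Xl w) n = QG"
proof (induction n)
  case 0 then show ?case by simp
next
  case (Suc n) then show ?case by (cases n) auto
qed

lemma reach_V:
  "u \<in> lists (sigmaG V) \<Longrightarrow> q = QG \<or> (\<exists>w\<in>V. q = St w) \<Longrightarrow>
   foldl deltaG q u = QG \<or> (\<exists>w\<in>V. foldl deltaG q u = St w)"
proof (induction u arbitrary: q)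
  case Nil then show ?case by simp
next
  case (Cons a u)
  have "deltaG q a = QG \<or> (\<exists>w\<in>V. deltaG q a = St w)"
    using Cons.prems by (cases a; cases q; fastforce simp: sigmaG_def)
  then show ?case using Cons by simp
qed

lemma reach_states:
  "u \<in> lists (sigmaG V) \<Longrightarrow> foldl deltaG QG u \<in> statesG V"
  using reach_V[of u V QG] by (auto simp: statesG_def)

abbreviation LG where "LG V \<equiv> dpa_lang (sigmaG V) deltaG QG cG"

lemma conc_in_sigma:
  "u \<in> lists S \<Longrightarrow> (\<forall>n. a n \<in> S) \<Longrightarrow> (u \<frown> a) n \<in> S"
  by (cases "n < length u") auto

lemma accept_Xl:
  assumes "u \<in> lists (sigmaG V)" "w \<in> V"
  shows "u \<frown> (\<lambda>_. Xl w) \<in> LG V \<longleftrightarrow> foldl deltaG QG u = St w"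
proof -
  have sig: "\<forall>n. (u \<frown> (\<lambda>_. Xl w)) n \<in> sigmaG V"
    using conc_in_sigma[OF assms(1)] assms(2) by (auto simp: sigmaG_def)
  let ?q = "foldl deltaG QG u"
  have lim: "limit (dpa_run deltaG QG (u \<frown> (\<lambda>_. Xl w))) = limit (dpa_run deltaG ?q (\<lambda>_. Xl w))"
    by (rule limit_run_conc)
  show ?thesis
  proof (cases ?q)
    case QG
    then have "limit (dpa_run deltaG ?q (\<lambda>_. Xl w)) = {QG}"
      by (intro limit_ev_const[where k=0]) (simp add: run_QG_X)
    then show ?thesis using sig lim QG by (simp add: dpa_lang_def dpa_accepts_def)
  next
    case (St v)
    show ?thesis
    proof (cases "v = w")
      case True
      then have "limit (dpa_run deltaG ?q (\<lambda>_. Xl w)) = {St w}"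
        using St by (intro limit_ev_const[where k=0]) (simp add: run_St_same)
      then show ?thesis using sig lim St True by (simp add: dpa_lang_def dpa_accepts_def)
    next
      case False
      then have "limit (dpa_run deltaG ?q (\<lambda>_. Xl w)) = {QG}"
        using St by (intro limit_ev_const[where k=1]) (simp add: run_St_other)
      then show ?thesis using sig lim St False by (simp add: dpa_lang_def dpa_accepts_def)
    qed
  qed
qed

lemma R_char:
  "right_cong (sigmaG V) (LG V) =
   {(u, v). u \<in> lists (sigmaG V) \<and> v \<in> lists (sigmaG V) \<and> foldl deltaG QG u = foldl deltaG QG v}"
  (is "?R = ?S")
proof
  show "?S \<subseteq> ?R"
  proof
    fix p assume "p \<in> ?S"
    then obtain u v where p: "p = (u, v)" and u: "u \<in> lists (sigmaG V)" and v: "v \<in> lists (sigmaG V)"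
      and eq: "foldl deltaG QG u = foldl deltaG QG v" by auto
    have "u \<frown> a \<in> LG V \<longleftrightarrow> v \<frown> a \<in> LG V" if "\<forall>n. a n \<in> sigmaG V" for a
    proof -
      have "\<forall>n. (u \<frown> a) n \<in> sigmaG V" "\<forall>n. (v \<frown> a) n \<in> sigmaG V"
        using conc_in_sigma[OF u that] conc_in_sigma[OF v that] by auto
      moreover have "limit (dpa_run deltaG QG (u \<frown> a)) = limit (dpa_run deltaG QG (v \<frown> a))"
        using limit_run_conc eq by metis
      ultimately show ?thesis by (simp add: dpa_lang_def dpa_accepts_def)
    qed
    then show "p \<in> ?R" using p u v by (simp add: right_cong_def)
  qed
  show "?R \<subseteq> ?S"
  proof
    fix p assume pR: "p \<in> ?R"
    then obtain u v where p: "p = (u, v)" and u: "u \<in> lists (sigmaG V)" and v: "v \<in> lists (sigmaG V)"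
      and eqv: "\<forall>a. (\<forall>n. a n \<in> sigmaG V) \<longrightarrow> (u \<frown> a \<in> LG V \<longleftrightarrow> v \<frown> a \<in> LG V)"
      by (auto simp: right_cong_def)
    have "foldl deltaG QG u = foldl deltaG QG v"
    proof (rule ccontr)
      assume ne: "foldl deltaG QG u \<noteq> foldl deltaG QG v"
      have "\<exists>w\<in>V. foldl deltaG QG u = St w \<or> foldl deltaG QG v = St w"
        using reach_V[OF u, of QG] reach_V[OF v, of QG] ne by auto
      then obtain w where w: "w \<in> V" and "foldl deltaG QG u = St w \<or> foldl deltaG QG v = St w" by blast
      moreover have "\<forall>n. (\<lambda>_. Xl w) n \<in> sigmaG V" using w by (simp add: sigmaG_def)
      ultimately show False using eqv accept_Xl[OF u w] accept_Xl[OF v w] ne by metis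
    qed
    then show "p \<in> ?S" using p u v by simp
  qed
qed

theorem lemma3:
  fixes V :: "'v set" and E :: "'v set set"
  assumes "undirected_graph V E"
    and "card E > 0"
  shows "informative_rc (sigmaG V) (statesG V) deltaG QG cG"
proof -
  define R where "R = right_cong (sigmaG V) (LG V)"
  define f where "f q = {u \<in> lists (sigmaG V). foldl deltaG QG u = q}" for q
  have cls: "R `` {u} = f (foldl deltaG QG u)" if "u \<in> lists (sigmaG V)" for u
    using that by (auto simp: R_def R_char f_def)
  have reach: "\<exists>u\<in>lists (sigmaG V). foldl deltaG QG u = q" if "q \<in> statesG V" for q
  proof -
    from that have "q = QG \<or> (\<exists>w\<in>V. q = St w)" by (auto simp: statesG_def)
    then show ?thesis
    proof
      assume "q = QG" then show ?thesis by (intro bexI[of _ "[]"]) auto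
    next
      assume "\<exists>w\<in>V. q = St w"
      then obtain w where "w \<in> V" "q = St w" by blast
      then show ?thesis by (intro bexI[of _ "[Vtx w]"]) (auto simp: sigmaG_def)
    qed
  qed
  have bij: "bij_betw f (statesG V) (lists (sigmaG V) // R)"
  proof (rule bij_betw_imageI)
    show "inj_on f (statesG V)"
    proof
      fix p q assume "p \<in> statesG V" "q \<in> statesG V" "f p = f q"
      then obtain u where "u \<in> lists (sigmaG V)" "foldl deltaG QG u = p" using reach by blast
      then have "u \<in> f p" by (simp add: f_def)
      with \<open>f p = f q\<close> have "u \<in> f q" by simp
      then show "p = q" using \<open>foldl deltaG QG u = p\<close> by (simp add: f_def)
    qed
    show "f ` statesG V = lists (sigmaG V) // R"
    proof
      show "f ` statesG V \<subseteq> lists (sigmaG V) // R"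
      proof
        fix X assume "X \<in> f ` statesG V"
        then obtain q where "q \<in> statesG V" "X = f q" by blast
        then obtain u where "u \<in> lists (sigmaG V)" "foldl deltaG QG u = q" using reach by blast
        then show "X \<in> lists (sigmaG V) // R" using cls \<open>X = f q\<close> by (metis quotientI)
      qed
      show "lists (sigmaG V) // R \<subseteq> f ` statesG V"
      proof
        fix X assume "X \<in> lists (sigmaG V) // R"
        then obtain u where "u \<in> lists (sigmaG V)" "X = R `` {u}" by (metis quotientE)
        then show "X \<in> f ` statesG V" using cls reach_states by blast
      qed
    qed
  qed
  have init: "f QG = R `` {[]}" using cls[of "[]"] by simp
  have trans: "\<forall>q\<in>statesG V. \<forall>\<sigma>\<in>sigmaG V. \<forall>u\<in>f q. f (deltaG q \<sigma>) = R `` {u @ [\<sigma>]}"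
  proof (intro ballI)
    fix q \<sigma> u assume "q \<in> statesG V" "\<sigma> \<in> sigmaG V" "u \<in> f q"
    then have "u @ [\<sigma>] \<in> lists (sigmaG V)" "foldl deltaG QG u = q" by (auto simp: f_def)
    then show "f (deltaG q \<sigma>) = R `` {u @ [\<sigma>]}" using cls by simp
  qed
  show ?thesis unfolding informative_rc_def Let_def R_def[symmetric]
    using bij init trans by blast
qed

end
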